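(* Suppose the Lipschitz assumption holds, and let $K^3_t>0$ be a constant with $\|\hat f_t(z_1,\gamma)-\hat f_t(z_2,\gamma)\|_\infty\le K^3_t\|z_1-z_2\|_\infty$ for all $\gamma\in\mathcal G$, $z_1,z_2\in\mathcal I(\mathcal X)$. Let $t\in\mathbb N_T$, $\gamma_t\in\mathcal G$, let $m_t\in\mathcal M_n$ be the empirical distribution of the agents' states at time $t$, and $z_t\in\Delta(\mathcal X)$. Suppose every agent uses $u^i_t=\gamma_t(x^i_t)$, let $m_{t+1}$ be the resulting empirical distribution at time $t+1$, and let $z_{t+1}=\hat f_t(z_t,\gamma_t)$. Then $$\mathbb E\big[\|m_{t+1}-z_{t+1}\|_\infty\big]\le K^3_t\|m_t-z_t\|_\infty+\mathcal O(1/\sqrt n).$$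
   Context: Fix $n\in\mathbb N$ agents, $T\in\mathbb N$, finite sets $\mathcal X,\mathcal U,\mathcal W$; $\mathbb N_k=\{1,\dots,k\}$; $\mathcal I(\mathcal X)=[0,1]^{\mathcal X}$; $\Delta(\mathcal X)$ the probability vectors on $\mathcal X$; $\mathcal M_n=\{m\in\Delta(\mathcal X):m(x)\in\{0,\tfrac1n,\dots,1\}\}$. Agent $i$ has state $x^i_t$ and action $u^i_t$; mean-field $m_t(x)=\frac1n\sum_i\mathbb 1(x^i_t=x)$; dynamics $x^i_{t+1}=f_t(x^i_t,u^i_t,w^i_t,m_t)$ with $f_t:\mathcal X\times\mathcal U\times\mathcal W\times\mathcal I(\mathcal X)\to\mathcal X$, where $w^1_t,\dots,w^n_t$ are i.i.d. with law $\mathbb P(w_t=\cdot)$ and independent of the states at time $t$. $\mathbb P(y|x,u,z)=\sum_w\mathbb 1(f_t(x,u,w,z)=y)\mathbb P(w_t=w)$; costs $\ell_t:\mathcal X\times\mathcal U\times\mathcal I(\mathcal X)\to\mathbb R_{\ge0}$. Lipschitz assumption: constants $K^1_t,K^2_t>0$ with $|\mathbb P(y|x,u,z_1)-\mathbb P(y|x,u,z_2)|\le K^1_t\|z_1-z_2\|_\infty$, $|\ell_t(x,u,z_1)-\ell_t(x,u,z_2)|\le K^2_t\|z_1-z_2\|_\infty$ for all $x,y,u$, $z_1,z_2\in\mathcal I(\mathcal X)$. $\mathcal G$ is the set of maps $\gamma:\mathcal X\to\mathcal U$; $\hat f_t(z,\gamma)(y)=\sum_x z(x)\mathbb P(y|x,\gamma(x),z)$.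 Model data do not depend on $n$; $\mathcal O(1/\sqrt n)$ denotes a quantity bounded by $C/\sqrt n$ with $C$ independent of $n$, $m_t$, $z_t$, $\gamma_t$. *)

theory Defs
  imports "HOL-Probability.Probability"
begin

definition supnorm :: "('x::finite \<Rightarrow> real) \<Rightarrow> real" where
  "supnorm g = Max (range (\<lambda>x. \<bar>g x\<bar>))"

definition in_I :: "('x \<Rightarrow> real) \<Rightarrow> bool" where
  "in_I z \<longleftrightarrow> (\<forall>x. 0 \<le> z x \<and> z x \<le> 1)"

definition in_Delta :: "('x::finite \<Rightarrow> real) \<Rightarrow> bool" where
  "in_Delta z \<longleftrightarrow> (\<forall>x. 0 \<le> z x) \<and> (\<Sum>x\<in>UNIV. z x) = 1"

definition empirical :: "nat \<Rightarrow> (nat \<Rightarrow> 'x) \<Rightarrow> 'x \<Rightarrow> real" where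
  "empirical n xs = (\<lambda>x. real (card {i\<in>{..<n}. xs i = x}) / real n)"

definition trans_prob ::
  "('x \<Rightarrow> 'u \<Rightarrow> 'w::finite \<Rightarrow> ('x \<Rightarrow> real) \<Rightarrow> 'x) \<Rightarrow> 'w pmf
     \<Rightarrow> 'x \<Rightarrow> 'u \<Rightarrow> ('x \<Rightarrow> real) \<Rightarrow> 'x \<Rightarrow> real" where
  "trans_prob f pw x u z y = (\<Sum>w\<in>UNIV. (if f x u w z = y then 1 else 0) * pmf pw w)"

definition fhat ::
  "('x::finite \<Rightarrow> 'u \<Rightarrow> 'w::finite \<Rightarrow> ('x \<Rightarrow> real) \<Rightarrow> 'x) \<Rightarrow> 'w pmf
     \<Rightarrow> ('x \<Rightarrow> real) \<Rightarrow> ('x \<Rightarrow> 'u) \<Rightarrow> 'x \<Rightarrow> real" where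
  "fhat f pw z \<gamma> = (\<lambda>y. \<Sum>x\<in>UNIV. z x * trans_prob f pw x (\<gamma> x) z y)"

definition next_empirical ::
  "('x \<Rightarrow> 'u \<Rightarrow> 'w \<Rightarrow> ('x \<Rightarrow> real) \<Rightarrow> 'x) \<Rightarrow> nat \<Rightarrow> (nat \<Rightarrow> 'x) \<Rightarrow> ('x \<Rightarrow> 'u)
     \<Rightarrow> (nat \<Rightarrow> 'w) \<Rightarrow> 'x \<Rightarrow> real" where
  "next_empirical f n xs \<gamma> ws =
     empirical n (\<lambda>i. f (xs i) (\<gamma> (xs i)) (ws i) (empirical n xs))"

end

theory Submission
  imports Defs
begin

lemma fin_Pi:
  fixes pw :: "'w::finite pmf" and A :: "nat set"
  assumes "finite A"
  shows "finite (set_pmf (Pi_pmf A d (\<lambda>_. pw)))"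
  by (rule finite_subset[OF set_Pi_pmf_subset'[OF assms]]) (auto intro!: finite_PiE_dflt assms)

lemma int_Pi:
  fixes pw :: "'w::finite pmf" and A :: "nat set" and g :: "_ \<Rightarrow> real"
  assumes "finite A"
  shows "integrable (measure_pmf (Pi_pmf A d (\<lambda>_. pw))) g"
  by (rule integrable_measure_pmf_finite[OF fin_Pi[OF assms]])

lemma comp_Pi:
  fixes pw :: "'w::finite pmf" and A :: "nat set" and g :: "'w \<Rightarrow> real"
  assumes "finite A" "i \<in> A"
  shows "measure_pmf.expectation (Pi_pmf A d (\<lambda>_. pw)) (\<lambda>ws. g (ws i)) = measure_pmf.expectation pw g"
proof -
  have "measure_pmf.expectation (Pi_pmf A d (\<lambda>_. pw)) (\<lambda>ws. g (ws i)) =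
     measure_pmf.expectation (map_pmf (\<lambda>f. f i) (Pi_pmf A d (\<lambda>_. pw))) g" by simp
  also have "\<dots> = measure_pmf.expectation pw g" using Pi_pmf_component[OF assms(1), of i d "\<lambda>_. pw"] assms(2) by simp
  finally show ?thesis .
qed

lemma pair_Pi:
  fixes pw :: "'w::finite pmf" and A :: "nat set" and g h :: "'w \<Rightarrow> real"
  assumes "finite A" "i \<in> A" "j \<in> A" "i \<noteq> j" "\<And>w. g w \<ge> 0" "\<And>w. h w \<ge> 0"
  shows "measure_pmf.expectation (Pi_pmf A d (\<lambda>_. pw)) (\<lambda>ws. g (ws i) * h (ws j)) =
     measure_pmf.expectation pw g * measure_pmf.expectation pw h"
proof -
  define F where "F = (\<lambda>(k::nat) v. if k = i then g v else if k = j then h v else (1::real))"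
  have P: "(\<Prod>k\<in>A. F k (ws k)) = g (ws i) * h (ws j)" for ws :: "nat \<Rightarrow> 'w"
  proof -
    have "(\<Prod>k\<in>A. F k (ws k)) = (\<Prod>k\<in>{i,j}. F k (ws k))"
      by (rule prod.mono_neutral_right) (use assms in \<open>auto simp: F_def\<close>)
    also have "\<dots> = g (ws i) * h (ws j)" using assms(4) by (simp add: F_def)
    finally show ?thesis .
  qed
  have "measure_pmf.expectation (Pi_pmf A d (\<lambda>_. pw)) (\<lambda>ws. \<Prod>k\<in>A. F k (ws k)) =
        (\<Prod>k\<in>A. measure_pmf.expectation pw (F k))"
    by (rule expectation_prod_Pi_pmf) (use assms in \<open>auto simp: F_def intro: integrable_measure_pmf_finite\<close>)
  also have "\<dots> = (\<Prod>k\<in>{i,j}. measure_pmf.expectation pw (F k))"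
    by (rule prod.mono_neutral_right) (use assms in \<open>auto simp: F_def\<close>)
  also have "\<dots> = measure_pmf.expectation pw g * measure_pmf.expectation pw h"
    using assms(4) by (simp add: F_def)
  finally show ?thesis by (simp add: P)
qed


lemma sq_bound:
  fixes pw :: "'w::finite pmf" and A :: "nat set" and Y :: "nat \<Rightarrow> 'w \<Rightarrow> real"
  assumes fin: "finite A" and bnd: "\<And>i w. \<bar>Y i w\<bar> \<le> 1" and cen: "\<And>i. measure_pmf.expectation pw (Y i) = 0"
  shows "measure_pmf.expectation (Pi_pmf A d (\<lambda>_. pw)) (\<lambda>ws. (\<Sum>i\<in>A. Y i (ws i))\<^sup>2) \<le> real (card A)"
proof -
  let ?M = "Pi_pmf A d (\<lambda>_. pw)"
  have off: "measure_pmf.expectation ?M (\<lambda>ws. Y i (ws i) * Y j (ws j)) = 0"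
    if "i \<in> A" "j \<in> A" "i \<noteq> j" for i j
  proof -
    have nn: "\<And>k w. 0 \<le> Y k w + 1" using bnd by (metis abs_le_D2 add.commute le_add_same_cancel1 le_diff_eq minus_le_iff neg_le_iff_le diff_minus_eq_add add_0_left) 
    have "measure_pmf.expectation ?M (\<lambda>ws. (Y i (ws i) + 1) * (Y j (ws j) + 1)) =
       measure_pmf.expectation pw (\<lambda>w. Y i w + 1) * measure_pmf.expectation pw (\<lambda>w. Y j w + 1)"
      by (rule pair_Pi[OF fin that nn nn])
    also have "\<dots> = 1"
      using cen[of i] cen[of j] by (simp add: integrable_measure_pmf_finite)
    finally have 1: "measure_pmf.expectation ?M (\<lambda>ws. (Y i (ws i) + 1) * (Y j (ws j) + 1)) = 1" .
    have "measure_pmf.expectation ?M (\<lambda>ws. (Y i (ws i) + 1) * (Y j (ws j) + 1)) =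
       measure_pmf.expectation ?M (\<lambda>ws. Y i (ws i) * Y j (ws j)) + measure_pmf.expectation ?M (\<lambda>ws. Y i (ws i))
       + measure_pmf.expectation ?M (\<lambda>ws. Y j (ws j)) + 1"
      by (simp add: algebra_simps int_Pi[OF fin])
    moreover have "measure_pmf.expectation ?M (\<lambda>ws. Y i (ws i)) = 0"
      using comp_Pi[OF fin that(1), of d pw "Y i"] cen by simp
    moreover have "measure_pmf.expectation ?M (\<lambda>ws. Y j (ws j)) = 0"
      using comp_Pi[OF fin that(2), of d pw "Y j"] cen by simp
    ultimately show ?thesis using 1 by simp
  qed
  have diag: "measure_pmf.expectation ?M (\<lambda>ws. Y i (ws i) * Y i (ws i)) \<le> 1" for i
  proof -
    have "measure_pmf.expectation ?M (\<lambda>ws. Y i (ws i) * Y i (ws i)) \<le> measure_pmf.expectation ?M (\<lambda>ws. 1)"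
    proof (rule integral_mono)
      fix ws :: "nat \<Rightarrow> 'w"
      have "\<bar>Y i (ws i)\<bar> * \<bar>Y i (ws i)\<bar> \<le> 1 * 1" by (rule mult_mono) (use bnd in auto)
      then show "Y i (ws i) * Y i (ws i) \<le> 1" by (simp add: abs_mult[symmetric])
    qed (auto simp: int_Pi[OF fin])
    then show ?thesis by simp
  qed
  have "measure_pmf.expectation ?M (\<lambda>ws. (\<Sum>i\<in>A. Y i (ws i))\<^sup>2) =
        measure_pmf.expectation ?M (\<lambda>ws. \<Sum>i\<in>A. \<Sum>j\<in>A. Y i (ws i) * Y j (ws j))"
    by (simp add: power2_eq_square sum_product)
  also have "\<dots> = (\<Sum>i\<in>A. \<Sum>j\<in>A. measure_pmf.expectation ?M (\<lambda>ws. Y i (ws i) * Y j (ws j)))"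
    by (simp add: int_Pi[OF fin] integral_sum)
  also have "\<dots> = (\<Sum>i\<in>A. measure_pmf.expectation ?M (\<lambda>ws. Y i (ws i) * Y i (ws i)))"
  proof (rule sum.cong[OF refl])
    fix i assume i: "i \<in> A"
    have "(\<Sum>j\<in>A. measure_pmf.expectation ?M (\<lambda>ws. Y i (ws i) * Y j (ws j))) =
       measure_pmf.expectation ?M (\<lambda>ws. Y i (ws i) * Y i (ws i)) +
       (\<Sum>j\<in>A-{i}. measure_pmf.expectation ?M (\<lambda>ws. Y i (ws i) * Y j (ws j)))"
      using sum.remove[OF fin i] by blast
    also have "(\<Sum>j\<in>A-{i}. measure_pmf.expectation ?M (\<lambda>ws. Y i (ws i) * Y j (ws j))) = 0"
      by (rule sum.neutral) (use off i in auto)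
    finally show "(\<Sum>j\<in>A. measure_pmf.expectation ?M (\<lambda>ws. Y i (ws i) * Y j (ws j))) =
       measure_pmf.expectation ?M (\<lambda>ws. Y i (ws i) * Y i (ws i))" by simp
  qed
  also have "\<dots> \<le> (\<Sum>i\<in>A. 1)" by (rule sum_mono) (rule diag)
  finally show ?thesis by simp
qed

lemma abs_bound:
  fixes pw :: "'w::finite pmf" and A :: "nat set" and Y :: "nat \<Rightarrow> 'w \<Rightarrow> real"
  assumes fin: "finite A" and bnd: "\<And>i w. \<bar>Y i w\<bar> \<le> 1" and cen: "\<And>i. measure_pmf.expectation pw (Y i) = 0"
  shows "measure_pmf.expectation (Pi_pmf A d (\<lambda>_. pw)) (\<lambda>ws. \<bar>\<Sum>i\<in>A. Y i (ws i)\<bar>) \<le> sqrt (real (card A))"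
proof -
  let ?M = "Pi_pmf A d (\<lambda>_. pw)"
  let ?S = "\<lambda>ws. \<Sum>i\<in>A. Y i (ws i)"
  define c where "c = measure_pmf.expectation ?M (\<lambda>ws. \<bar>?S ws\<bar>)"
  have c0: "c \<ge> 0" unfolding c_def by simp
  have "0 \<le> measure_pmf.expectation ?M (\<lambda>ws. (\<bar>?S ws\<bar> - c)\<^sup>2)" by simp
  also have "\<dots> = measure_pmf.expectation ?M (\<lambda>ws. (?S ws)\<^sup>2 - 2 * c * \<bar>?S ws\<bar> + c\<^sup>2)"
    by (rule Bochner_Integration.integral_cong) (auto simp: power2_eq_square algebra_simps)
  also have "\<dots> = measure_pmf.expectation ?M (\<lambda>ws. (?S ws)\<^sup>2) - 2 * c * c + c\<^sup>2"
    by (simp add: int_Pi[OF fin] c_def)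
  finally have "c\<^sup>2 \<le> measure_pmf.expectation ?M (\<lambda>ws. (?S ws)\<^sup>2)" by (simp add: power2_eq_square)
  also have "\<dots> \<le> real (card A)" by (rule sq_bound[OF fin bnd cen])
  finally have "c\<^sup>2 \<le> real (card A)" .
  then have "sqrt (c\<^sup>2) \<le> sqrt (real (card A))" by (rule real_sqrt_le_mono)
  then show ?thesis using c0 by (simp add: c_def)
qed


lemma supnorm_ge: "\<bar>g x\<bar> \<le> supnorm (g :: 'x::finite \<Rightarrow> real)"
  unfolding supnorm_def by (rule Max_ge) auto

lemma supnorm_le: "(\<And>x. \<bar>g x\<bar> \<le> c) \<Longrightarrow> supnorm (g :: 'x::finite \<Rightarrow> real) \<le> c"
  unfolding supnorm_def by (subst Max_le_iff) auto

lemma supnorm_le_sum: "supnorm (g :: 'x::finite \<Rightarrow> real) \<le> (\<Sum>x\<in>UNIV. \<bar>g x\<bar>)"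
  by (rule supnorm_le) (rule member_le_sum, auto)

lemma supnorm_tri: "supnorm ((a :: 'x::finite \<Rightarrow> real) - c) \<le> supnorm (a - b) + supnorm (b - c)"
proof (rule supnorm_le)
  fix x
  have "\<bar>a x - c x\<bar> \<le> \<bar>a x - b x\<bar> + \<bar>b x - c x\<bar>" using abs_triangle_ineq[of "a x - b x" "b x - c x"] by simp
  also have "\<dots> \<le> supnorm (a - b) + supnorm (b - c)"
    using supnorm_ge[of "a - b" x] supnorm_ge[of "b - c" x] by simp
  finally show "\<bar>(a - c) x\<bar> \<le> supnorm (a - b) + supnorm (b - c)" by simp
qed

lemma supnorm_nonneg: "0 \<le> supnorm (g :: 'x::finite \<Rightarrow> real)"
  using supnorm_ge[of g undefined] by linarith

lemma card_sum_real: "finite A \<Longrightarrow> real (card {i\<in>A. P i}) = (\<Sum>i\<in>A. if P i then 1 else 0)"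
  by (subst real_of_card) (rule sum.inter_filter)

lemma empirical_I: "n \<ge> 1 \<Longrightarrow> in_I (empirical n xs)"
proof -
  assume n: "n \<ge> 1"
  have "card {i\<in>{..<n}. xs i = x} \<le> n" for x
    using card_mono[of "{..<n}" "{i\<in>{..<n}. xs i = x}"] by auto
  then show ?thesis using n unfolding in_I_def empirical_def by (auto simp: divide_le_eq_1)
qed

lemma Delta_I: "in_Delta (z :: 'x::finite \<Rightarrow> real) \<Longrightarrow> in_I z"
  unfolding in_Delta_def in_I_def
proof (intro allI conjI; elim conjE)
  fix x assume 0: "\<forall>x. 0 \<le> z x" and 1: "sum z UNIV = 1"
  show "0 \<le> z x" using 0 by simp
  have "z x \<le> sum z UNIV" by (rule member_le_sum) (use 0 in auto)
  then show "z x \<le> 1" using 1 by simp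
qed

theorem lemma5:
  fixes f :: "'x::finite \<Rightarrow> 'u::finite \<Rightarrow> 'w::finite \<Rightarrow> ('x \<Rightarrow> real) \<Rightarrow> 'x"
    and cost :: "'x \<Rightarrow> 'u \<Rightarrow> ('x \<Rightarrow> real) \<Rightarrow> real"
    and pw :: "'w pmf"
    and K1 K2 K3 :: real
  assumes cost_nonneg: "\<And>x u z. cost x u z \<ge> 0"
    and K1_pos: "K1 > 0" and K2_pos: "K2 > 0"
    and lip_P: "\<And>x y u z1 z2. in_I z1 \<Longrightarrow> in_I z2 \<Longrightarrow>
        \<bar>trans_prob f pw x u z1 y - trans_prob f pw x u z2 y\<bar> \<le> K1 * supnorm (z1 - z2)"
    and lip_l: "\<And>x u z1 z2. in_I z1 \<Longrightarrow> in_I z2 \<Longrightarrow>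
        \<bar>cost x u z1 - cost x u z2\<bar> \<le> K2 * supnorm (z1 - z2)"
    and K3_pos: "K3 > 0"
    and lip_fhat: "\<And>\<gamma> z1 z2. in_I z1 \<Longrightarrow> in_I z2 \<Longrightarrow>
        supnorm (fhat f pw z1 \<gamma> - fhat f pw z2 \<gamma>) \<le> K3 * supnorm (z1 - z2)"
  shows "\<exists>C. \<forall>n::nat. \<forall>xs :: nat \<Rightarrow> 'x. \<forall>\<gamma> :: 'x \<Rightarrow> 'u. \<forall>z :: 'x \<Rightarrow> real.
           n \<ge> 1 \<longrightarrow> in_Delta z \<longrightarrow>
           measure_pmf.expectation (Pi_pmf {..<n} undefined (\<lambda>_. pw))
             (\<lambda>ws. supnorm (next_empirical f n xs \<gamma> ws - fhat f pw z \<gamma>))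
           \<le> K3 * supnorm (empirical n xs - z) + C / sqrt (real n)"
proof (rule exI[where x="real CARD('x)"], intro allI impI)
  fix n :: nat and xs :: "nat \<Rightarrow> 'x" and \<gamma> :: "'x \<Rightarrow> 'u" and z :: "'x \<Rightarrow> real"
  assume n: "n \<ge> 1" and zD: "in_Delta z"
  let ?M = "Pi_pmf {..<n} undefined (\<lambda>_. pw)"
  define m where "m = empirical n xs"
  define g where "g = (\<lambda>i w. f (xs i) (\<gamma> (xs i)) w m)"
  define pr where "pr = (\<lambda>i y. trans_prob f pw (xs i) (\<gamma> (xs i)) m y)"
  define Y where "Y = (\<lambda>y i w. (if g i w = y then 1 else 0) - pr i y)"
  have pr_eq: "pr i y = measure_pmf.expectation pw (\<lambda>w. if g i w = y then 1 else 0)" for i y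
    unfolding pr_def trans_prob_def g_def
    by (subst integral_measure_pmf_real[where A = UNIV]) auto
  have pr01: "0 \<le> pr i y \<and> pr i y \<le> 1" for i y
  proof -
    have "measure_pmf.expectation pw (\<lambda>w. if g i w = y then 1 else 0 :: real) \<le> measure_pmf.expectation pw (\<lambda>w. 1)"
      by (rule integral_mono) (auto intro: integrable_measure_pmf_finite)
    then show ?thesis unfolding pr_eq by simp
  qed
  have Ybnd: "\<bar>Y y i w\<bar> \<le> 1" for y i w using pr01[of i y] unfolding Y_def by auto
  have Ycen: "measure_pmf.expectation pw (Y y i) = 0" for y i
    unfolding Y_def pr_eq by (simp add: integrable_measure_pmf_finite)
  have nposr: "real n > 0" using n by simp
  have nxt: "next_empirical f n xs \<gamma> ws y = (\<Sum>i<n. if g i (ws i) = y then 1 else 0) / real n" for ws y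
  proof -
    have "next_empirical f n xs \<gamma> ws y = real (card {i\<in>{..<n}. g i (ws i) = y}) / real n"
      unfolding next_empirical_def empirical_def g_def m_def by simp
    also have "real (card {i\<in>{..<n}. g i (ws i) = y}) = (\<Sum>i<n. if g i (ws i) = y then 1 else 0)"
      by (rule card_sum_real) simp
    finally show ?thesis .
  qed
  have fhm: "fhat f pw m \<gamma> y = (\<Sum>i<n. pr i y) / real n" for y
  proof -
    define T where "T = (\<lambda>x. trans_prob f pw x (\<gamma> x) m y)"
    have "(\<Sum>i<n. pr i y) = (\<Sum>x\<in>UNIV. \<Sum>i\<in>{i. i \<in> {..<n} \<and> xs i = x}. pr i y)"
      by (rule sum.group[symmetric]) auto
    also have "\<dots> = (\<Sum>x\<in>UNIV. real (card {i\<in>{..<n}. xs i = x}) * T x)"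
    proof (rule sum.cong[OF refl])
      fix x
      have "(\<Sum>i\<in>{i. i \<in> {..<n} \<and> xs i = x}. pr i y) = (\<Sum>i\<in>{i. i \<in> {..<n} \<and> xs i = x}. T x)"
        by (rule sum.cong[OF refl]) (auto simp: pr_def T_def)
      then show "(\<Sum>i\<in>{i. i \<in> {..<n} \<and> xs i = x}. pr i y) = real (card {i\<in>{..<n}. xs i = x}) * T x"
        by simp
    qed
    finally have 1: "(\<Sum>i<n. pr i y) = (\<Sum>x\<in>UNIV. real (card {i\<in>{..<n}. xs i = x}) * T x)" .
    have "fhat f pw m \<gamma> y = (\<Sum>x\<in>UNIV. m x * T x)"
      unfolding fhat_def T_def by simp
    also have "\<dots> = (\<Sum>x\<in>UNIV. real (card {i\<in>{..<n}. xs i = x}) * T x / real n)"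
      unfolding m_def empirical_def by (rule sum.cong[OF refl]) simp
    also have "\<dots> = (\<Sum>x\<in>UNIV. real (card {i\<in>{..<n}. xs i = x}) * T x) / real n"
      by (rule sum_divide_distrib[symmetric])
    finally show ?thesis unfolding 1 .
  qed
  have diff: "next_empirical f n xs \<gamma> ws y - fhat f pw m \<gamma> y = (\<Sum>i\<in>{..<n}. Y y i (ws i)) / real n" for ws y
    unfolding nxt fhm Y_def by (simp add: sum_subtractf diff_divide_distrib)
  have int: "integrable ?M h" for h :: "_ \<Rightarrow> real" by (rule int_Pi) simp
  have "measure_pmf.expectation ?M (\<lambda>ws. supnorm (next_empirical f n xs \<gamma> ws - fhat f pw z \<gamma>))
     \<le> measure_pmf.expectation ?M (\<lambda>ws. (\<Sum>y\<in>UNIV. \<bar>(\<Sum>i\<in>{..<n}. Y y i (ws i))\<bar> / real n)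
             + supnorm (fhat f pw m \<gamma> - fhat f pw z \<gamma>))"
  proof (rule integral_mono[OF int int])
    fix ws
    have "supnorm (next_empirical f n xs \<gamma> ws - fhat f pw z \<gamma>)
       \<le> supnorm (next_empirical f n xs \<gamma> ws - fhat f pw m \<gamma>) + supnorm (fhat f pw m \<gamma> - fhat f pw z \<gamma>)"
      by (rule supnorm_tri)
    moreover have "supnorm (next_empirical f n xs \<gamma> ws - fhat f pw m \<gamma>) \<le> (\<Sum>y\<in>UNIV. \<bar>(\<Sum>i\<in>{..<n}. Y y i (ws i))\<bar> / real n)"
    proof -
      have "supnorm (next_empirical f n xs \<gamma> ws - fhat f pw m \<gamma>) \<le> (\<Sum>y\<in>UNIV. \<bar>(next_empirical f n xs \<gamma> ws - fhat f pw m \<gamma>) y\<bar>)"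
        by (rule supnorm_le_sum)
      also have "\<dots> = (\<Sum>y\<in>UNIV. \<bar>(\<Sum>i\<in>{..<n}. Y y i (ws i))\<bar> / real n)"
        using nposr by (simp add: diff)
      finally show ?thesis .
    qed
    ultimately show "supnorm (next_empirical f n xs \<gamma> ws - fhat f pw z \<gamma>)
       \<le> (\<Sum>y\<in>UNIV. \<bar>(\<Sum>i\<in>{..<n}. Y y i (ws i))\<bar> / real n) + supnorm (fhat f pw m \<gamma> - fhat f pw z \<gamma>)"
      by linarith
  qed
  also have "\<dots> = (\<Sum>y\<in>UNIV. measure_pmf.expectation ?M (\<lambda>ws. \<bar>(\<Sum>i\<in>{..<n}. Y y i (ws i))\<bar>) / real n)
             + supnorm (fhat f pw m \<gamma> - fhat f pw z \<gamma>)"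
  proof -
    have "measure_pmf.expectation ?M (\<lambda>ws. (\<Sum>y\<in>UNIV. \<bar>(\<Sum>i\<in>{..<n}. Y y i (ws i))\<bar> / real n)
             + supnorm (fhat f pw m \<gamma> - fhat f pw z \<gamma>)) =
       measure_pmf.expectation ?M (\<lambda>ws. (\<Sum>y\<in>UNIV. \<bar>(\<Sum>i\<in>{..<n}. Y y i (ws i))\<bar> / real n))
       + measure_pmf.expectation ?M (\<lambda>ws. supnorm (fhat f pw m \<gamma> - fhat f pw z \<gamma>))"
      by (rule Bochner_Integration.integral_add[OF int int])
    also have "measure_pmf.expectation ?M (\<lambda>ws. (\<Sum>y\<in>UNIV. \<bar>(\<Sum>i\<in>{..<n}. Y y i (ws i))\<bar> / real n))
       = (\<Sum>y\<in>UNIV. measure_pmf.expectation ?M (\<lambda>ws. \<bar>(\<Sum>i\<in>{..<n}. Y y i (ws i))\<bar> / real n))"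
      by (intro Bochner_Integration.integral_sum int)
    also have "\<dots> = (\<Sum>y\<in>UNIV. measure_pmf.expectation ?M (\<lambda>ws. \<bar>(\<Sum>i\<in>{..<n}. Y y i (ws i))\<bar>) / real n)"
      by (rule sum.cong[OF refl]) (rule integral_divide_zero)
    also have "measure_pmf.expectation ?M (\<lambda>ws. supnorm (fhat f pw m \<gamma> - fhat f pw z \<gamma>)) = supnorm (fhat f pw m \<gamma> - fhat f pw z \<gamma>)"
      by simp
    finally show ?thesis .
  qed
  also have "\<dots> \<le> (\<Sum>y\<in>(UNIV::'x set). sqrt (real n) / real n) + K3 * supnorm (m - z)"
  proof (rule add_mono)
    show "(\<Sum>y\<in>UNIV. measure_pmf.expectation ?M (\<lambda>ws. \<bar>(\<Sum>i\<in>{..<n}. Y y i (ws i))\<bar>) / real n)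
        \<le> (\<Sum>y\<in>(UNIV::'x set). sqrt (real n) / real n)"
    proof (rule sum_mono)
      fix y
      have "measure_pmf.expectation ?M (\<lambda>ws. \<bar>(\<Sum>i\<in>{..<n}. Y y i (ws i))\<bar>) \<le> sqrt (real (card {..<n}))"
        by (rule abs_bound) (auto simp: Ybnd Ycen)
      note hb = this
      show "measure_pmf.expectation ?M (\<lambda>ws. \<bar>(\<Sum>i\<in>{..<n}. Y y i (ws i))\<bar>) / real n \<le> sqrt (real n) / real n"
        using divide_right_mono[OF hb, of "real n"] nposr card_lessThan[of n] by simp
    qed
    show "supnorm (fhat f pw m \<gamma> - fhat f pw z \<gamma>) \<le> K3 * supnorm (m - z)"
      unfolding m_def by (rule lip_fhat[OF empirical_I[OF n] Delta_I[OF zD]])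
  qed
  also have "\<dots> = K3 * supnorm (empirical n xs - z) + real CARD('x) / sqrt (real n)"
  proof -
    have s: "sqrt (real n) * sqrt (real n) = real n" using nposr by simp
    have sp: "sqrt (real n) \<noteq> 0" using nposr by simp
    have e1: "sqrt (real n) / real n = 1 / sqrt (real n)"
      by (metis s sp divide_divide_eq_right div_self div_by_1 divide_divide_eq_left nonzero_mult_div_cancel_left)
    have e2: "(\<Sum>y\<in>(UNIV::'x set). sqrt (real n) / real n) = real CARD('x) / sqrt (real n)"
      by (simp only: sum_constant e1 times_divide_eq_right mult_1_right)
    show ?thesis unfolding e2 m_def by (rule add.commute)
  qed
  finally show "measure_pmf.expectation ?M (\<lambda>ws. supnorm (next_empirical f n xs \<gamma> ws - fhat f pw z \<gamma>))
     \<le> K3 * supnorm (empirical n xs - z) + real CARD('x) / sqrt (real n)" .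
qed

end
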